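(* Let $n\geq 1$ and let $\phi$ be a variable-free formula with modalities among $[0],\dots,[n]$. Let $\overline{\phi}$ be the formula obtained from $\phi$ by replacing every subformula of the form $[n]\psi$ by $\top$. If $\mathbf{GLP}\nvdash\langle n\rangle\top\to\neg[0]\phi$, then $\mathbf{GLP}\nvdash\langle n\rangle\top\to\neg[0]\overline{\phi}$.
   Context: $\mathbf{GLP}$ is the propositional polymodal logic with modalities $[0],[1],\dots$ ($\langle k\rangle:=\neg[k]\neg$) axiomatized by classical tautologies; $[k](\phi\to\psi)\to([k]\phi\to[k]\psi)$; $[k]([k]\phi\to\phi)\to[k]\phi$; $\langle j\rangle\phi\to[k]\langle j\rangle\phi$ for $j<k$; $[j]\phi\to[k]\phi$ for $j\leq k$; rules modus ponens and necessitation. Variable-free formulas are built from $\top,\bot$ by boolean connectives and modalities. *)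

theory Defs
  imports Main
begin

datatype fm = Var nat | Bot | Imp fm fm | Box nat fm

definition Neg :: "fm \<Rightarrow> fm" where "Neg p = Imp p Bot"
definition Top :: fm where "Top = Imp Bot Bot"
definition Dia :: "nat \<Rightarrow> fm \<Rightarrow> fm" where "Dia k p = Neg (Box k (Neg p))"

text \<open>Classical propositional evaluation, treating variables and boxed
  formulas as atoms; a tautology is a formula true under every such valuation
  (i.e. a substitution instance of a propositional tautology).\<close>

fun peval :: "(fm \<Rightarrow> bool) \<Rightarrow> fm \<Rightarrow> bool" where
  "peval v (Var i) = v (Var i)"
| "peval v Bot = False"
| "peval v (Imp p q) = (peval v p \<longrightarrow> peval v q)"
| "peval v (Box k p) = v (Box k p)"

definition taut :: "fm \<Rightarrow> bool" where "taut p = (\<forall>v. peval v p)"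

inductive GLP :: "fm \<Rightarrow> bool" where
  ax_taut: "taut p \<Longrightarrow> GLP p"
| ax_K: "GLP (Imp (Box k (Imp p q)) (Imp (Box k p) (Box k q)))"
| ax_Loeb: "GLP (Imp (Box k (Imp (Box k p) p)) (Box k p))"
| ax_dia: "j < k \<Longrightarrow> GLP (Imp (Dia j p) (Box k (Dia j p)))"
| ax_mono: "j \<le> k \<Longrightarrow> GLP (Imp (Box j p) (Box k p))"
| mp: "GLP (Imp p q) \<Longrightarrow> GLP p \<Longrightarrow> GLP q"
| nec: "GLP p \<Longrightarrow> GLP (Box k p)"

fun var_free :: "fm \<Rightarrow> bool" where
  "var_free (Var i) = False"
| "var_free Bot = True"
| "var_free (Imp p q) = (var_free p \<and> var_free q)"
| "var_free (Box k p) = var_free p"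

fun mods :: "fm \<Rightarrow> nat set" where
  "mods (Var i) = {}"
| "mods Bot = {}"
| "mods (Imp p q) = mods p \<union> mods q"
| "mods (Box k p) = insert k (mods p)"

fun bar :: "nat \<Rightarrow> fm \<Rightarrow> fm" where
  "bar n (Var i) = Var i"
| "bar n Bot = Bot"
| "bar n (Imp p q) = Imp (bar n p) (bar n q)"
| "bar n (Box k p) = (if k = n then Top else Box k (bar n p))"

end

theory Submission
  imports Defs
begin

definition Conj :: "fm \<Rightarrow> fm \<Rightarrow> fm" where "Conj a b = Neg (Imp a (Neg b))"

lemma tautI: "(\<And>v. peval v p) \<Longrightarrow> GLP p"
  by (simp add: taut_def ax_taut)

lemma mp1: "GLP a \<Longrightarrow> (\<And>v. peval v a \<Longrightarrow> peval v c) \<Longrightarrow> GLP c"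
  by (metis GLP.mp tautI peval.simps(3))

lemma mp2: "GLP a \<Longrightarrow> GLP b \<Longrightarrow> (\<And>v. peval v a \<Longrightarrow> peval v b \<Longrightarrow> peval v c) \<Longrightarrow> GLP c"
proof -
  assume a: "GLP a" and b: "GLP b" and h: "\<And>v. peval v a \<Longrightarrow> peval v b \<Longrightarrow> peval v c"
  have "GLP (Imp b c)" using a by (rule mp1) (use h in auto)
  then show ?thesis using b by (rule GLP.mp)
qed

lemma mp3: "GLP a \<Longrightarrow> GLP b \<Longrightarrow> GLP d \<Longrightarrow> (\<And>v. peval v a \<Longrightarrow> peval v b \<Longrightarrow> peval v d \<Longrightarrow> peval v c) \<Longrightarrow> GLP c"
proof -
  assume a: "GLP a" and b: "GLP b" and d: "GLP d" and h: "\<And>v. peval v a \<Longrightarrow> peval v b \<Longrightarrow> peval v d \<Longrightarrow> peval v c"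
  have "GLP (Imp d c)" using a b by (rule mp2) (use h in auto)
  then show ?thesis using d by (rule GLP.mp)
qed

lemma reg: "GLP (Imp a b) \<Longrightarrow> GLP (Imp (Box k a) (Box k b))"
  by (rule GLP.mp[OF ax_K nec])

lemma box2: "GLP (Imp a (Imp b c)) \<Longrightarrow> GLP (Imp (Box k a) (Imp (Box k b) (Box k c)))"
proof -
  assume "GLP (Imp a (Imp b c))"
  then have 1: "GLP (Imp (Box k a) (Box k (Imp b c)))" by (rule reg)
  have 2: "GLP (Imp (Box k (Imp b c)) (Imp (Box k b) (Box k c)))" by (rule ax_K)
  show ?thesis using 1 2 by (rule mp2) auto
qed

lemma boxconj: "GLP (Imp (Box k a) (Imp (Box k b) (Box k (Conj a b))))"
  by (rule box2, rule tautI) (simp add: Conj_def Neg_def)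

lemma trans4: "GLP (Imp (Box k p) (Box k (Box k p)))"
proof -
  define q where "q = Conj p (Box k p)"
  have 1: "GLP (Imp (Box k q) (Box k p))"
    by (rule reg, rule tautI) (simp add: q_def Conj_def Neg_def)
  have 2: "GLP (Imp p (Imp (Box k q) q))"
    using 1 by (rule mp1) (simp add: q_def Conj_def Neg_def)
  have 3: "GLP (Imp (Box k p) (Box k (Imp (Box k q) q)))" using 2 by (rule reg)
  have 4: "GLP (Imp (Box k (Imp (Box k q) q)) (Box k q))" by (rule ax_Loeb)
  have 5: "GLP (Imp (Box k q) (Box k (Box k p)))"
    by (rule reg, rule tautI) (simp add: q_def Conj_def Neg_def)
  show ?thesis using 3 4 5 by (rule mp3) auto
qed

lemma lemA:
  fixes n :: nat
  defines "N \<equiv> Box n (Neg Top)"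
  defines "H \<equiv> Conj N (Box 0 N)"
  shows "mods \<phi> \<subseteq> {..n} \<Longrightarrow> GLP (Imp H (Imp \<phi> (bar n \<phi>))) \<and> GLP (Imp H (Imp (bar n \<phi>) \<phi>))"
proof (induction \<phi>)
  case (Var x)
  then show ?case by (auto intro!: tautI)
next
  case Bot
  then show ?case by (auto intro!: tautI)
next
  case (Imp p1 p2)
  then have a: "GLP (Imp H (Imp p1 (bar n p1)))" "GLP (Imp H (Imp (bar n p1) p1))"
    and b: "GLP (Imp H (Imp p2 (bar n p2)))" "GLP (Imp H (Imp (bar n p2) p2))" by auto
  have "GLP (Imp H (Imp (Imp p1 p2) (bar n (Imp p1 p2))))"
    using a(2) b(1) by (rule mp2) auto
  moreover have "GLP (Imp H (Imp (bar n (Imp p1 p2)) (Imp p1 p2)))"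
    using a(1) b(2) by (rule mp2) auto
  ultimately show ?case by simp
next
  case (Box k p)
  show ?case
  proof (cases "k = n")
    case True
    have 1: "GLP (Imp N (Box n p))" unfolding N_def
      by (rule reg, rule tautI) (simp add: Top_def Neg_def)
    have "GLP (Imp H (Imp Top (Box n p)))" using 1
      by (rule mp1) (simp add: H_def Conj_def Neg_def Top_def)
    moreover have "GLP (Imp H (Imp (Box k p) Top))"
      by (rule tautI) (simp add: Top_def)
    ultimately show ?thesis using True by simp
  next
    case False
    with Box.prems have kn: "k < n" and mp: "mods p \<subseteq> {..n}" by auto
    from Box.IH[OF mp] have ih: "GLP (Imp H (Imp p (bar n p)))" "GLP (Imp H (Imp (bar n p) p))" by auto
    have m1: "GLP (Imp (Box 0 N) (Box k N))" by (rule ax_mono) simp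
    have m2: "GLP (Imp (Box 0 (Box 0 N)) (Box k (Box 0 N)))" by (rule ax_mono) simp
    have t: "GLP (Imp (Box 0 N) (Box 0 (Box 0 N)))" by (rule trans4)
    have bc: "GLP (Imp (Box k N) (Imp (Box k (Box 0 N)) (Box k H)))"
      unfolding H_def by (rule boxconj)
    have hk0: "GLP (Imp (Box 0 N) (Imp (Box k (Box 0 N)) (Box k H)))"
      using m1 bc by (rule mp2) auto
    have hk1: "GLP (Imp (Box 0 N) (Box k (Box 0 N)))" using t m2 by (rule mp2) auto
    have hk2: "GLP (Imp (Box 0 N) (Box k H))" using hk0 hk1 by (rule mp2) auto
    have hk: "GLP (Imp H (Box k H))" using hk2
      by (rule mp1) (simp add: H_def Conj_def Neg_def)
    have b1: "GLP (Imp (Box k H) (Imp (Box k p) (Box k (bar n p))))" using ih(1) by (rule box2)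
    have b2: "GLP (Imp (Box k H) (Imp (Box k (bar n p)) (Box k p)))" using ih(2) by (rule box2)
    have "GLP (Imp H (Imp (Box k p) (Box k (bar n p))))" using hk b1 by (rule mp2) auto
    moreover have "GLP (Imp H (Imp (Box k (bar n p)) (Box k p)))" using hk b2 by (rule mp2) auto
    ultimately show ?thesis using False by simp
  qed
qed

theorem mainTheorem20:
  fixes n :: nat and \<phi> :: fm
  assumes "n \<ge> 1" and "var_free \<phi>" and "mods \<phi> \<subseteq> {..n}"
    and "\<not> GLP (Imp (Dia n Top) (Neg (Box 0 \<phi>)))"
  shows "\<not> GLP (Imp (Dia n Top) (Neg (Box 0 (bar n \<phi>))))"
proof
  assume hyp: "GLP (Imp (Dia n Top) (Neg (Box 0 (bar n \<phi>))))"
  define N where "N = Box n (Neg Top)"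
  define H where "H = Conj N (Box 0 N)"
  have A: "GLP (Imp H (Imp \<phi> (bar n \<phi>)))" using lemA[OF assms(3)] unfolding N_def H_def by blast
  have h1: "GLP (Imp (Box 0 (bar n \<phi>)) N)" using hyp
    by (rule mp1) (auto simp: Dia_def Neg_def N_def)
  have b: "GLP (Imp (Box 0 H) (Imp (Box 0 \<phi>) (Box 0 (bar n \<phi>))))" using A by (rule box2)
  have c0: "GLP (Imp (Box 0 N) (Imp (Box 0 (Box 0 N)) (Box 0 H)))" unfolding H_def by (rule boxconj)
  have c: "GLP (Imp (Box 0 N) (Box 0 H))" using c0 trans4 by (rule mp2) auto
  have S1: "GLP (Imp (Box 0 \<phi>) (Imp (Box 0 N) N))" using h1 b c by (rule mp3) auto
  have r: "GLP (Imp (Box 0 (Box 0 \<phi>)) (Box 0 (Imp (Box 0 N) N)))" using S1 by (rule reg)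
  have l: "GLP (Imp (Box 0 (Imp (Box 0 N) N)) (Box 0 N))" by (rule ax_Loeb)
  have t: "GLP (Imp (Box 0 \<phi>) (Box 0 (Box 0 \<phi>)))" by (rule trans4)
  have "GLP (Imp (Box 0 \<phi>) (Box 0 N))" using r l t by (rule mp3) auto
  then have "GLP (Imp (Box 0 \<phi>) N)" using S1 by (rule mp2) auto
  then have "GLP (Imp (Dia n Top) (Neg (Box 0 \<phi>)))"
    by (rule mp1) (auto simp: Dia_def Neg_def N_def)
  with assms(4) show False by simp
qed

end
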